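(* Let $R$ be a commutative ring and $M$ a non-zero $R$-module. (1) If $M=\sum_{i=1}^n K_i$ is a minimal second representation of $M$ such that the ideals $Ann(K_1),\dots,Ann(K_n)$ are pairwise incomparable (i.e. $att^s(M)=Min(att^s(M))$) and $K_i\cap\sum_{j\neq i}K_j$ is a PS-hollow submodule of $M$ for all $i\in\{1,\dots,n\}$, then $M=\bigoplus_{i=1}^n K_i$ if and only if $K_i\cap K_j=0$ for all $i\neq j$. (2) Let $M$ be distributive and $M=\sum_{i=1}^n K_i$ a minimal PS-hollow representation, with $K_i$ $H_i$-PS-hollow, such that every submodule of $K_i$ is zero or strongly irreducible or $H_i$-PS-hollow. Then $M=\bigoplus_{i=1}^n K_i$.
   Context: A submodule $N\neq 0$ is second iff for every ideal $I\leq R$, $IN=N$ or $IN=0$. A minimal second representation of $M$ is $M=\sum_{i=1}^n K_i$ with each $K_i$ second, the ideals $Ann(K_i)$ pairwise distinct, and no $K_j$ contained in $\sum_{i\neq j}K_i$; $att^s(M)=\{Ann(K_i)\}$. An $R$-submodule $N\leq M$ is PS-hollow iff for every ideal $I$ and submodule $L$: $N\subseteq IM+L$ implies $N\subseteq IM$ or $N\subseteq L$. For PS-hollow $N$: $A_N=\{I: N\subseteq IM\}$, $H_N$ its minimal elements, $In(N)=\bigcap_{I\in H_N}IM$ ($=M$ if $H_N=\emptyset$); $N$ is $H$-PS-hollow iff PS-hollow with $H_N=H$. A minimal PS-hollow representation is $M=\sum_{i=1}^n K_i$ with each $K_i$ $H_i$-PS-hollow, $In(K_1),\dots,In(K_n)$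 pairwise incomparable, and $K_j\not\subseteq\sum_{i\neq j}K_i$ for all $j$. A proper submodule $N\lneq M$ is strongly irreducible iff for all submodules $A,B\leq M$, $A\cap B\subseteq N$ implies $A\subseteq N$ or $B\subseteq N$. $M$ is distributive iff its lattice of submodules is distributive. *)

theory Defs
  imports "HOL-Algebra.Module" "HOL-Algebra.Ideal"
begin

definition gen_sm :: "('a, 'c) ring_scheme \<Rightarrow> ('a, 'b, 'd) module_scheme \<Rightarrow> 'b set \<Rightarrow> 'b set" where
  "gen_sm R M X = \<Inter>{L. submodule L R M \<and> X \<subseteq> L}"

definition sm_sum :: "('a, 'b, 'd) module_scheme \<Rightarrow> 'b set \<Rightarrow> 'b set \<Rightarrow> 'b set" where
  "sm_sum M A B = {a \<oplus>\<^bsub>M\<^esub> b | a b. a \<in> A \<and> b \<in> B}"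

text \<open>Sum of a family of submodules indexed by S (the zero submodule if S is empty).\<close>
definition sm_Sum :: "('a, 'c) ring_scheme \<Rightarrow> ('a, 'b, 'd) module_scheme \<Rightarrow> 'i set \<Rightarrow> ('i \<Rightarrow> 'b set) \<Rightarrow> 'b set" where
  "sm_Sum R M S K = gen_sm R M (\<Union>i\<in>S. K i)"

definition ideal_sm :: "('a, 'c) ring_scheme \<Rightarrow> ('a, 'b, 'd) module_scheme \<Rightarrow> 'a set \<Rightarrow> 'b set \<Rightarrow> 'b set" where
  "ideal_sm R M I N = gen_sm R M {a \<odot>\<^bsub>M\<^esub> x | a x. a \<in> I \<and> x \<in> N}"

definition Ann :: "('a, 'c) ring_scheme \<Rightarrow> ('a, 'b, 'd) module_scheme \<Rightarrow> 'b set \<Rightarrow> 'a set" where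
  "Ann R M N = {a \<in> carrier R. \<forall>x\<in>N. a \<odot>\<^bsub>M\<^esub> x = \<zero>\<^bsub>M\<^esub>}"

definition second_sm :: "('a, 'c) ring_scheme \<Rightarrow> ('a, 'b, 'd) module_scheme \<Rightarrow> 'b set \<Rightarrow> bool" where
  "second_sm R M N \<longleftrightarrow> submodule N R M \<and> N \<noteq> {\<zero>\<^bsub>M\<^esub>} \<and>
     (\<forall>I. ideal I R \<longrightarrow> ideal_sm R M I N = N \<or> ideal_sm R M I N = {\<zero>\<^bsub>M\<^esub>})"

definition min_second_rep :: "('a, 'c) ring_scheme \<Rightarrow> ('a, 'b, 'd) module_scheme \<Rightarrow> nat \<Rightarrow> (nat \<Rightarrow> 'b set) \<Rightarrow> bool" where
  "min_second_rep R M n K \<longleftrightarrow>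
     sm_Sum R M {1..n} K = carrier M \<and>
     (\<forall>i\<in>{1..n}. second_sm R M (K i)) \<and>
     (\<forall>i\<in>{1..n}. \<forall>j\<in>{1..n}. i \<noteq> j \<longrightarrow> Ann R M (K i) \<noteq> Ann R M (K j)) \<and>
     (\<forall>j\<in>{1..n}. \<not> K j \<subseteq> sm_Sum R M ({1..n} - {j}) K)"

definition PS_hollow :: "('a, 'c) ring_scheme \<Rightarrow> ('a, 'b, 'd) module_scheme \<Rightarrow> 'b set \<Rightarrow> bool" where
  "PS_hollow R M N \<longleftrightarrow> submodule N R M \<and>
     (\<forall>I L. ideal I R \<longrightarrow> submodule L R M \<longrightarrow>
        N \<subseteq> sm_sum M (ideal_sm R M I (carrier M)) L \<longrightarrow>
        N \<subseteq> ideal_sm R M I (carrier M) \<or> N \<subseteq> L)"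

definition A_set :: "('a, 'c) ring_scheme \<Rightarrow> ('a, 'b, 'd) module_scheme \<Rightarrow> 'b set \<Rightarrow> 'a set set" where
  "A_set R M N = {I. ideal I R \<and> N \<subseteq> ideal_sm R M I (carrier M)}"

definition H_set :: "('a, 'c) ring_scheme \<Rightarrow> ('a, 'b, 'd) module_scheme \<Rightarrow> 'b set \<Rightarrow> 'a set set" where
  "H_set R M N = {I \<in> A_set R M N. \<forall>J\<in>A_set R M N. J \<subseteq> I \<longrightarrow> J = I}"

definition In_sm :: "('a, 'c) ring_scheme \<Rightarrow> ('a, 'b, 'd) module_scheme \<Rightarrow> 'b set \<Rightarrow> 'b set" where
  "In_sm R M N = carrier M \<inter> (\<Inter>I\<in>H_set R M N. ideal_sm R M I (carrier M))"

definition H_PS_hollow :: "('a, 'c) ring_scheme \<Rightarrow> ('a, 'b, 'd) module_scheme \<Rightarrow> 'a set set \<Rightarrow> 'b set \<Rightarrow> bool" where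
  "H_PS_hollow R M H N \<longleftrightarrow> PS_hollow R M N \<and> H_set R M N = H"

definition min_PS_hollow_rep :: "('a, 'c) ring_scheme \<Rightarrow> ('a, 'b, 'd) module_scheme \<Rightarrow> nat \<Rightarrow> (nat \<Rightarrow> 'b set) \<Rightarrow> (nat \<Rightarrow> 'a set set) \<Rightarrow> bool" where
  "min_PS_hollow_rep R M n K H \<longleftrightarrow>
     sm_Sum R M {1..n} K = carrier M \<and>
     (\<forall>i\<in>{1..n}. H_PS_hollow R M (H i) (K i)) \<and>
     (\<forall>i\<in>{1..n}. \<forall>j\<in>{1..n}. i \<noteq> j \<longrightarrow> \<not> In_sm R M (K i) \<subseteq> In_sm R M (K j)) \<and>
     (\<forall>j\<in>{1..n}. \<not> K j \<subseteq> sm_Sum R M ({1..n} - {j}) K)"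

definition strongly_irreducible :: "('a, 'c) ring_scheme \<Rightarrow> ('a, 'b, 'd) module_scheme \<Rightarrow> 'b set \<Rightarrow> bool" where
  "strongly_irreducible R M N \<longleftrightarrow> submodule N R M \<and> N \<noteq> carrier M \<and>
     (\<forall>A B. submodule A R M \<longrightarrow> submodule B R M \<longrightarrow> A \<inter> B \<subseteq> N \<longrightarrow> A \<subseteq> N \<or> B \<subseteq> N)"

text \<open>Distributive lattice of submodules (join = sum, meet = intersection).\<close>
definition distributive_module :: "('a, 'c) ring_scheme \<Rightarrow> ('a, 'b, 'd) module_scheme \<Rightarrow> bool" where
  "distributive_module R M \<longleftrightarrow>
     (\<forall>A B C. submodule A R M \<longrightarrow> submodule B R M \<longrightarrow> submodule C R M \<longrightarrow>
        A \<inter> sm_sum M B C = sm_sum M (A \<inter> B) (A \<inter> C))"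

definition direct_sum_rep :: "('a, 'c) ring_scheme \<Rightarrow> ('a, 'b, 'd) module_scheme \<Rightarrow> nat \<Rightarrow> (nat \<Rightarrow> 'b set) \<Rightarrow> bool" where
  "direct_sum_rep R M n K \<longleftrightarrow>
     sm_Sum R M {1..n} K = carrier M \<and>
     (\<forall>i\<in>{1..n}. K i \<inter> sm_Sum R M ({1..n} - {i}) K = {\<zero>\<^bsub>M\<^esub>})"

end

theory Submission
  imports Defs
begin

context module
begin

lemma sub_zero: "submodule H R M \<Longrightarrow> \<zero>\<^bsub>M\<^esub> \<in> H"
proof -
  assume h: "submodule H R M"
  then obtain a where a: "a \<in> H" using submoduleE(2) by blast
  then have "\<ominus>\<^bsub>M\<^esub> a \<in> H" using submoduleE(3)[OF h] by blast
  then have "a \<oplus>\<^bsub>M\<^esub> \<ominus>\<^bsub>M\<^esub> a \<in> H" using submoduleE(5)[OF h] a by blast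
  moreover have "a \<in> carrier M" using a submoduleE(1)[OF h] by blast
  ultimately show ?thesis using M.r_neg by metis
qed

lemma gen_sm_sub: "X \<subseteq> carrier M \<Longrightarrow> submodule (gen_sm R M X) R M"
proof -
  assume X: "X \<subseteq> carrier M"
  let ?F = "{L. submodule L R M \<and> X \<subseteq> L}"
  have cF: "carrier M \<in> ?F" using X carrier_is_submodule by blast
  show ?thesis unfolding gen_sm_def
  proof (rule submoduleI)
    show "\<Inter>?F \<subseteq> carrier M" using cF by blast
    show "\<zero>\<^bsub>M\<^esub> \<in> \<Inter>?F" using sub_zero by blast
    show "\<And>a. a \<in> \<Inter>?F \<Longrightarrow> \<ominus>\<^bsub>M\<^esub> a \<in> \<Inter>?F" using submoduleE(3) by blast
    show "\<And>a b. a \<in> \<Inter>?F \<Longrightarrow> b \<in> \<Inter>?F \<Longrightarrow> a \<oplus>\<^bsub>M\<^esub> b \<in> \<Inter>?F" using submoduleE(5) by blast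
    show "\<And>a x. a \<in> carrier R \<Longrightarrow> x \<in> \<Inter>?F \<Longrightarrow> a \<odot>\<^bsub>M\<^esub> x \<in> \<Inter>?F" using submoduleE(4) by blast
  qed
qed

lemma gen_sm_incl: "X \<subseteq> gen_sm R M X"
  unfolding gen_sm_def by blast

lemma gen_sm_min: "submodule L R M \<Longrightarrow> X \<subseteq> L \<Longrightarrow> gen_sm R M X \<subseteq> L"
  unfolding gen_sm_def by blast

lemma gen_sm_mono: "X \<subseteq> Y \<Longrightarrow> gen_sm R M X \<subseteq> gen_sm R M Y"
  unfolding gen_sm_def by blast

lemma zero_sub: "submodule {\<zero>\<^bsub>M\<^esub>} R M"
  by (rule submoduleI) auto

lemma sm_sum_sub:
  assumes A: "submodule A R M" and B: "submodule B R M"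
  shows "submodule (sm_sum M A B) R M"
proof -
  have cA: "A \<subseteq> carrier M" and cB: "B \<subseteq> carrier M" using submoduleE(1) A B by auto
  show ?thesis unfolding sm_sum_def
  proof (rule submoduleI)
    show "{a \<oplus>\<^bsub>M\<^esub> b |a b. a \<in> A \<and> b \<in> B} \<subseteq> carrier M" using cA cB by auto
    show "\<zero>\<^bsub>M\<^esub> \<in> {a \<oplus>\<^bsub>M\<^esub> b |a b. a \<in> A \<and> b \<in> B}"
      using sub_zero[OF A] sub_zero[OF B] by (auto intro!: exI[of _ "\<zero>\<^bsub>M\<^esub>"])
    fix x assume "x \<in> {a \<oplus>\<^bsub>M\<^esub> b |a b. a \<in> A \<and> b \<in> B}"
    then obtain a b where ab: "x = a \<oplus>\<^bsub>M\<^esub> b" "a \<in> A" "b \<in> B" by blast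
    have ca: "a \<in> carrier M" "b \<in> carrier M" using ab cA cB by auto
    have "\<ominus>\<^bsub>M\<^esub> x = \<ominus>\<^bsub>M\<^esub> a \<oplus>\<^bsub>M\<^esub> \<ominus>\<^bsub>M\<^esub> b"
      using ab ca by (simp add: M.minus_add)
    then show "\<ominus>\<^bsub>M\<^esub> x \<in> {a \<oplus>\<^bsub>M\<^esub> b |a b. a \<in> A \<and> b \<in> B}"
      using submoduleE(3)[OF A] submoduleE(3)[OF B] ab by blast
  next
    fix x y assume "x \<in> {a \<oplus>\<^bsub>M\<^esub> b |a b. a \<in> A \<and> b \<in> B}" "y \<in> {a \<oplus>\<^bsub>M\<^esub> b |a b. a \<in> A \<and> b \<in> B}"
    then obtain a b a' b' where ab: "x = a \<oplus>\<^bsub>M\<^esub> b" "a \<in> A" "b \<in> B"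
      and ab': "y = a' \<oplus>\<^bsub>M\<^esub> b'" "a' \<in> A" "b' \<in> B" by blast
    have ca: "a \<in> carrier M" "b \<in> carrier M" "a' \<in> carrier M" "b' \<in> carrier M" using ab ab' cA cB by auto
    have "x \<oplus>\<^bsub>M\<^esub> y = (a \<oplus>\<^bsub>M\<^esub> a') \<oplus>\<^bsub>M\<^esub> (b \<oplus>\<^bsub>M\<^esub> b')"
      using ab ab' ca by (simp add: M.a_ac)
    then show "x \<oplus>\<^bsub>M\<^esub> y \<in> {a \<oplus>\<^bsub>M\<^esub> b |a b. a \<in> A \<and> b \<in> B}"
      using submoduleE(5)[OF A] submoduleE(5)[OF B] ab ab' by blast
  next
    fix r x assume r: "r \<in> carrier R" and "x \<in> {a \<oplus>\<^bsub>M\<^esub> b |a b. a \<in> A \<and> b \<in> B}"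
    then obtain a b where ab: "x = a \<oplus>\<^bsub>M\<^esub> b" "a \<in> A" "b \<in> B" by blast
    have ca: "a \<in> carrier M" "b \<in> carrier M" using ab cA cB by auto
    have "r \<odot>\<^bsub>M\<^esub> x = r \<odot>\<^bsub>M\<^esub> a \<oplus>\<^bsub>M\<^esub> r \<odot>\<^bsub>M\<^esub> b"
      using ab ca r by (simp add: smult_r_distr)
    then show "r \<odot>\<^bsub>M\<^esub> x \<in> {a \<oplus>\<^bsub>M\<^esub> b |a b. a \<in> A \<and> b \<in> B}"
      using submoduleE(4)[OF A] submoduleE(4)[OF B] ab r by blast
  qed
qed

lemma sm_sum_left: "submodule A R M \<Longrightarrow> submodule B R M \<Longrightarrow> A \<subseteq> sm_sum M A B"
proof
  fix x assume A: "submodule A R M" and B: "submodule B R M" and x: "x \<in> A"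
  have "x = x \<oplus>\<^bsub>M\<^esub> \<zero>\<^bsub>M\<^esub>" using x submoduleE(1)[OF A] by auto
  then show "x \<in> sm_sum M A B" unfolding sm_sum_def using sub_zero[OF B] x by blast
qed

lemma sm_sum_right: "submodule A R M \<Longrightarrow> submodule B R M \<Longrightarrow> B \<subseteq> sm_sum M A B"
proof
  fix x assume A: "submodule A R M" and B: "submodule B R M" and x: "x \<in> B"
  have "x = \<zero>\<^bsub>M\<^esub> \<oplus>\<^bsub>M\<^esub> x" using x submoduleE(1)[OF B] by auto
  then show "x \<in> sm_sum M A B" unfolding sm_sum_def using sub_zero[OF A] x by blast
qed

lemma sm_sum_mono: "A \<subseteq> A' \<Longrightarrow> B \<subseteq> B' \<Longrightarrow> sm_sum M A B \<subseteq> sm_sum M A' B'"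
  unfolding sm_sum_def by blast

lemma sm_Sum_sub: "(\<And>k. k \<in> S \<Longrightarrow> submodule (K k) R M) \<Longrightarrow> submodule (sm_Sum R M S K) R M"
  unfolding sm_Sum_def by (rule gen_sm_sub) (use submoduleE(1) in blast)

lemma sm_Sum_empty: "sm_Sum R M {} K = {\<zero>\<^bsub>M\<^esub>}"
proof -
  have "sm_Sum R M {} K \<subseteq> {\<zero>\<^bsub>M\<^esub>}" unfolding sm_Sum_def by (rule gen_sm_min[OF zero_sub]) auto
  moreover have "\<zero>\<^bsub>M\<^esub> \<in> sm_Sum R M {} K" using sm_Sum_sub[of "{}" K] sub_zero by blast
  ultimately show ?thesis by blast
qed

lemma K_sub_Sum: "j \<in> S \<Longrightarrow> K j \<subseteq> sm_Sum R M S K"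
  unfolding sm_Sum_def using gen_sm_incl by blast

lemma sm_Sum_insert:
  assumes "\<And>k. k \<in> insert j T \<Longrightarrow> submodule (K k) R M"
  shows "sm_Sum R M (insert j T) K \<subseteq> sm_sum M (K j) (sm_Sum R M T K)"
proof -
  have Kj: "submodule (K j) R M" using assms by blast
  have ST: "submodule (sm_Sum R M T K) R M" using assms sm_Sum_sub[of T K] by blast
  show ?thesis unfolding sm_Sum_def[of R M "insert j T"]
  proof (rule gen_sm_min[OF sm_sum_sub[OF Kj ST]])
    show "(\<Union>i\<in>insert j T. K i) \<subseteq> sm_sum M (K j) (sm_Sum R M T K)"
      using sm_sum_left[OF Kj ST] sm_sum_right[OF Kj ST] K_sub_Sum[of _ T K] by blast
  qed
qed

lemma Ann_mult:
  assumes "a \<in> Ann R M N" "b \<in> carrier R" "N \<subseteq> carrier M"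
  shows "b \<otimes> a \<in> Ann R M N" "a \<otimes> b \<in> Ann R M N"
proof -
  have a: "a \<in> carrier R" using assms unfolding Ann_def by blast
  have 1: "b \<otimes> a \<in> Ann R M N"
    unfolding Ann_def using assms a by (auto simp: smult_assoc1 Ann_def)
  then show "b \<otimes> a \<in> Ann R M N" .
  have "a \<otimes> b = b \<otimes> a" using a assms(2) m_comm by blast
  then show "a \<otimes> b \<in> Ann R M N" using 1 by simp
qed

lemma second_not_ann:
  assumes sec: "second_sm R M K" and a: "a \<in> carrier R" and na: "a \<notin> Ann R M K"
  shows "ideal_sm R M (PIdl a) K = K"
proof -
  have Ksub: "submodule K R M" using sec unfolding second_sm_def by blast
  have cK: "K \<subseteq> carrier M" using submoduleE(1)[OF Ksub] .
  have "ideal_sm R M (PIdl a) K = K \<or> ideal_sm R M (PIdl a) K = {\<zero>\<^bsub>M\<^esub>}"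
    using sec cgenideal_ideal[OF a] unfolding second_sm_def by blast
  moreover have "ideal_sm R M (PIdl a) K \<noteq> {\<zero>\<^bsub>M\<^esub>}"
  proof
    assume z: "ideal_sm R M (PIdl a) K = {\<zero>\<^bsub>M\<^esub>}"
    have "a = \<one> \<otimes> a" using a by simp
    then have aP: "a \<in> PIdl a" unfolding cgenideal_def by (intro CollectI exI[of _ "\<one>"] conjI one_closed)
    have "\<forall>x\<in>K. a \<odot>\<^bsub>M\<^esub> x = \<zero>\<^bsub>M\<^esub>"
    proof
      fix x assume xK: "x \<in> K"
      have "a \<odot>\<^bsub>M\<^esub> x \<in> {c \<odot>\<^bsub>M\<^esub> y |c y. c \<in> PIdl a \<and> y \<in> K}"
        by (rule CollectI, rule exI[of _ a], rule exI[of _ x]) (intro conjI refl aP xK)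
      then have "a \<odot>\<^bsub>M\<^esub> x \<in> ideal_sm R M (PIdl a) K"
        unfolding ideal_sm_def by (rule subsetD[OF gen_sm_incl])
      then show "a \<odot>\<^bsub>M\<^esub> x = \<zero>\<^bsub>M\<^esub>" using z by blast
    qed
    then show False using na a unfolding Ann_def by blast
  qed
  ultimately show ?thesis by blast
qed

lemma Ann_prime:
  assumes sec: "second_sm R M K" and a: "a \<in> carrier R" and b: "b \<in> carrier R"
    and ab: "a \<otimes> b \<in> Ann R M K" and na: "a \<notin> Ann R M K"
  shows "b \<in> Ann R M K"
proof -
  have Ksub: "submodule K R M" using sec unfolding second_sm_def by blast
  have cK: "K \<subseteq> carrier M" using submoduleE(1)[OF Ksub] .
  have eq: "ideal_sm R M (PIdl a) K = K" using second_not_ann[OF sec a na] .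
  let ?S = "{y \<in> carrier M. b \<odot>\<^bsub>M\<^esub> y = \<zero>\<^bsub>M\<^esub>}"
  have Ssub: "submodule ?S R M"
  proof (rule submoduleI)
    show "?S \<subseteq> carrier M" by blast
    show "\<zero>\<^bsub>M\<^esub> \<in> ?S" using b by simp
    show "\<And>x. x \<in> ?S \<Longrightarrow> \<ominus>\<^bsub>M\<^esub> x \<in> ?S" using b by (simp add: smult_r_minus)
    show "\<And>x y. x \<in> ?S \<Longrightarrow> y \<in> ?S \<Longrightarrow> x \<oplus>\<^bsub>M\<^esub> y \<in> ?S" using b by (simp add: smult_r_distr)
    show "\<And>r x. r \<in> carrier R \<Longrightarrow> x \<in> ?S \<Longrightarrow> r \<odot>\<^bsub>M\<^esub> x \<in> ?S"
    proof -
      fix r x assume r: "r \<in> carrier R" and x: "x \<in> ?S"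
      have "b \<odot>\<^bsub>M\<^esub> (r \<odot>\<^bsub>M\<^esub> x) = (b \<otimes> r) \<odot>\<^bsub>M\<^esub> x" using r x b by (simp add: smult_assoc1)
      also have "\<dots> = (r \<otimes> b) \<odot>\<^bsub>M\<^esub> x" using r b by (simp add: m_comm)
      also have "\<dots> = \<zero>\<^bsub>M\<^esub>" using r x b by (simp add: smult_assoc1)
      finally show "r \<odot>\<^bsub>M\<^esub> x \<in> ?S" using r x by simp
    qed
  qed
  have "ideal_sm R M (PIdl a) K \<subseteq> ?S"
    unfolding ideal_sm_def
  proof (rule gen_sm_min[OF Ssub], rule subsetI)
    fix z assume "z \<in> {c \<odot>\<^bsub>M\<^esub> x |c x. c \<in> PIdl a \<and> x \<in> K}"
    then obtain r x where z: "z = (r \<otimes> a) \<odot>\<^bsub>M\<^esub> x" and r: "r \<in> carrier R" and x: "x \<in> K"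
      unfolding cgenideal_def by blast
    have xc: "x \<in> carrier M" using x cK by blast
    have abx: "(a \<otimes> b) \<odot>\<^bsub>M\<^esub> x = \<zero>\<^bsub>M\<^esub>" using ab x unfolding Ann_def by blast
    have "b \<odot>\<^bsub>M\<^esub> z = (b \<otimes> (r \<otimes> a)) \<odot>\<^bsub>M\<^esub> x" using z r a b xc by (simp add: smult_assoc1)
    also have "b \<otimes> (r \<otimes> a) = r \<otimes> (a \<otimes> b)" using r a b by (simp add: m_ac)
    also have "(r \<otimes> (a \<otimes> b)) \<odot>\<^bsub>M\<^esub> x = r \<odot>\<^bsub>M\<^esub> ((a \<otimes> b) \<odot>\<^bsub>M\<^esub> x)" using r a b xc by (simp add: smult_assoc1)
    also have "\<dots> = \<zero>\<^bsub>M\<^esub>" using abx r by simp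
    finally show "z \<in> ?S" using z r a xc by simp
  qed
  then have "K \<subseteq> ?S" using eq by simp
  then show ?thesis using b unfolding Ann_def by blast
qed

lemma PS_sub: "PS_hollow R M N \<Longrightarrow> submodule N R M"
  unfolding PS_hollow_def by (rule conjunct1)

lemma PS_use:
  assumes "PS_hollow R M N" "ideal I R" "submodule L R M" "N \<subseteq> sm_sum M (ideal_sm R M I (carrier M)) L"
  shows "N \<subseteq> ideal_sm R M I (carrier M) \<or> N \<subseteq> L"
proof -
  have "\<forall>I L. ideal I R \<longrightarrow> submodule L R M \<longrightarrow>
        N \<subseteq> sm_sum M (ideal_sm R M I (carrier M)) L \<longrightarrow>
        N \<subseteq> ideal_sm R M I (carrier M) \<or> N \<subseteq> L"
    using assms(1) unfolding PS_hollow_def by (rule conjunct2)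
  then show ?thesis using assms(2-4) by (elim allE impE) assumption+
qed

lemma second_sub: "second_sm R M N \<Longrightarrow> submodule N R M"
  unfolding second_sm_def by (rule conjunct1)

lemma ideal_sm_mono:
  assumes NN: "N \<subseteq> N'" shows "ideal_sm R M I N \<subseteq> ideal_sm R M I N'"
  unfolding ideal_sm_def
proof (rule gen_sm_mono, rule subsetI)
  fix z assume "z \<in> {a \<odot>\<^bsub>M\<^esub> x |a x. a \<in> I \<and> x \<in> N}"
  then obtain a x where z: "z = a \<odot>\<^bsub>M\<^esub> x" "a \<in> I" "x \<in> N" by blast
  have x': "x \<in> N'" using z(3) NN by (rule subsetD[rotated])
  show "z \<in> {a \<odot>\<^bsub>M\<^esub> x |a x. a \<in> I \<and> x \<in> N'}"
    by (rule CollectI, rule exI[of _ a], rule exI[of _ x]) (intro conjI z(1) z(2) x')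
qed

lemma exists_sep:
  assumes sec: "\<forall>k\<in>{1..n}. second_sm R M (K k)"
    and inc: "\<forall>i\<in>{1..n}. \<forall>j\<in>{1..n}. i \<noteq> j \<longrightarrow> \<not> Ann R M (K i) \<subseteq> Ann R M (K j)"
    and j: "j \<in> {1..n}"
  shows "finite T \<Longrightarrow> T \<subseteq> {1..n} - {j} \<Longrightarrow>
     \<exists>a\<in>carrier R. a \<notin> Ann R M (K j) \<and> (\<forall>k\<in>T. a \<in> Ann R M (K k))"
proof (induction T rule: finite_induct)
  case empty
  have ne: "K j \<noteq> {\<zero>\<^bsub>M\<^esub>}" and sj: "submodule (K j) R M" using sec j unfolding second_sm_def by auto
  then obtain x where x: "x \<in> K j" "x \<noteq> \<zero>\<^bsub>M\<^esub>" using sub_zero by blast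
  have "x \<in> carrier M" using x submoduleE(1)[OF sj] by blast
  then have "\<one> \<odot>\<^bsub>M\<^esub> x \<noteq> \<zero>\<^bsub>M\<^esub>" using x by simp
  then have "\<one> \<notin> Ann R M (K j)" using x unfolding Ann_def by blast
  then show ?case by blast
next
  case (insert k T)
  then obtain a where a: "a \<in> carrier R" "a \<notin> Ann R M (K j)" "\<forall>k\<in>T. a \<in> Ann R M (K k)" by blast
  have k: "k \<in> {1..n}" "k \<noteq> j" using insert by auto
  then obtain c where c: "c \<in> Ann R M (K k)" "c \<notin> Ann R M (K j)" using inc j by blast
  have cc: "c \<in> carrier R" using c unfolding Ann_def by blast
  have secj: "second_sm R M (K j)" using sec j by blast
  have nj: "a \<otimes> c \<notin> Ann R M (K j)" using Ann_prime[OF secj a(1) cc] a c by blast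
  have ck: "K k \<subseteq> carrier M" using sec k submoduleE(1) unfolding second_sm_def by blast
  have 1: "a \<otimes> c \<in> Ann R M (K k)" using Ann_mult(1)[OF c(1) a(1) ck] .
  have 2: "\<forall>t\<in>T. a \<otimes> c \<in> Ann R M (K t)"
  proof
    fix t assume t: "t \<in> T"
    then have "K t \<subseteq> carrier M" using sec insert.prems submoduleE(1) unfolding second_sm_def by blast
    then show "a \<otimes> c \<in> Ann R M (K t)" using Ann_mult(2)[OF _ cc] a t by blast
  qed
  show ?case using 1 2 nj a(1) cc by blast
qed

lemma IM_sub:
  assumes sumM: "sm_Sum R M {1..n} K = carrier M"
    and subs: "\<forall>k\<in>{1..n}. submodule (K k) R M"
    and j: "j \<in> {1..n}" and a: "a \<in> carrier R"
    and ann: "\<forall>k\<in>{1..n}-{j}. a \<in> Ann R M (K k)"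
  shows "ideal_sm R M (PIdl a) (carrier M) \<subseteq> K j"
proof -
  have Kj: "submodule (K j) R M" using subs j by blast
  let ?S = "{x \<in> carrier M. a \<odot>\<^bsub>M\<^esub> x \<in> K j}"
  have Ssub: "submodule ?S R M"
  proof (rule submoduleI)
    show "?S \<subseteq> carrier M" by blast
    show "\<zero>\<^bsub>M\<^esub> \<in> ?S" using a sub_zero[OF Kj] by simp
    show "\<And>x. x \<in> ?S \<Longrightarrow> \<ominus>\<^bsub>M\<^esub> x \<in> ?S" using a submoduleE(3)[OF Kj] by (simp add: smult_r_minus)
    show "\<And>x y. x \<in> ?S \<Longrightarrow> y \<in> ?S \<Longrightarrow> x \<oplus>\<^bsub>M\<^esub> y \<in> ?S" using a submoduleE(5)[OF Kj] by (simp add: smult_r_distr)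
    show "\<And>r x. r \<in> carrier R \<Longrightarrow> x \<in> ?S \<Longrightarrow> r \<odot>\<^bsub>M\<^esub> x \<in> ?S"
    proof -
      fix r x assume r: "r \<in> carrier R" and x: "x \<in> ?S"
      have "a \<odot>\<^bsub>M\<^esub> (r \<odot>\<^bsub>M\<^esub> x) = (a \<otimes> r) \<odot>\<^bsub>M\<^esub> x" using r x a by (simp add: smult_assoc1)
      also have "\<dots> = (r \<otimes> a) \<odot>\<^bsub>M\<^esub> x" using r a by (simp add: m_comm)
      also have "\<dots> = r \<odot>\<^bsub>M\<^esub> (a \<odot>\<^bsub>M\<^esub> x)" using r x a by (simp add: smult_assoc1)
      finally show "r \<odot>\<^bsub>M\<^esub> x \<in> ?S" using r x submoduleE(4)[OF Kj] by simp
    qed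
  qed
  have "(\<Union>k\<in>{1..n}. K k) \<subseteq> ?S"
  proof
    fix x assume "x \<in> (\<Union>k\<in>{1..n}. K k)"
    then obtain k where k: "k \<in> {1..n}" "x \<in> K k" by blast
    have xc: "x \<in> carrier M" using k subs submoduleE(1) by blast
    show "x \<in> ?S"
    proof (cases "k = j")
      case True then show ?thesis using k xc a submoduleE(4)[OF Kj] by blast
    next
      case False
      then have "a \<odot>\<^bsub>M\<^esub> x = \<zero>\<^bsub>M\<^esub>" using ann k unfolding Ann_def by blast
      then show ?thesis using xc sub_zero[OF Kj] by simp
    qed
  qed
  then have cS: "carrier M \<subseteq> ?S" using gen_sm_min[OF Ssub] sumM unfolding sm_Sum_def by blast
  show ?thesis unfolding ideal_sm_def
  proof (rule gen_sm_min[OF Kj], rule subsetI)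
    fix z assume "z \<in> {c \<odot>\<^bsub>M\<^esub> x |c x. c \<in> PIdl a \<and> x \<in> carrier M}"
    then obtain r x where z: "z = (r \<otimes> a) \<odot>\<^bsub>M\<^esub> x" and r: "r \<in> carrier R" and x: "x \<in> carrier M"
      unfolding cgenideal_def by blast
    have "z = r \<odot>\<^bsub>M\<^esub> (a \<odot>\<^bsub>M\<^esub> x)" using z r a x by (simp add: smult_assoc1)
    then show "z \<in> K j" using cS x r submoduleE(4)[OF Kj] by blast
  qed
qed

lemma part1:
  assumes msr: "min_second_rep R M n K"
    and inc: "\<forall>i\<in>{1..n}. \<forall>j\<in>{1..n}. i \<noteq> j \<longrightarrow> \<not> Ann R M (K i) \<subseteq> Ann R M (K j)"
    and ps: "\<forall>i\<in>{1..n}. PS_hollow R M (K i \<inter> sm_Sum R M ({1..n} - {i}) K)"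
  shows "direct_sum_rep R M n K \<longleftrightarrow> (\<forall>i\<in>{1..n}. \<forall>j\<in>{1..n}. i \<noteq> j \<longrightarrow> K i \<inter> K j = {\<zero>\<^bsub>M\<^esub>})"
proof -
  have sumM: "sm_Sum R M {1..n} K = carrier M" and sec: "\<forall>k\<in>{1..n}. second_sm R M (K k)"
    using msr unfolding min_second_rep_def by auto
  have subs: "\<forall>k\<in>{1..n}. submodule (K k) R M" using sec second_sub by blast
  show ?thesis
  proof
    assume d: "direct_sum_rep R M n K"
    show "\<forall>i\<in>{1..n}. \<forall>j\<in>{1..n}. i \<noteq> j \<longrightarrow> K i \<inter> K j = {\<zero>\<^bsub>M\<^esub>}"
    proof (intro ballI impI)
      fix i j assume ij: "i \<in> {1..n}" "j \<in> {1..n}" "i \<noteq> j"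
      have "K j \<subseteq> sm_Sum R M ({1..n} - {i}) K" using ij by (intro K_sub_Sum) blast
      then have "K i \<inter> K j \<subseteq> {\<zero>\<^bsub>M\<^esub>}" using d ij unfolding direct_sum_rep_def by blast
      moreover have "\<zero>\<^bsub>M\<^esub> \<in> K i \<inter> K j" using subs ij sub_zero[of "K i"] sub_zero[of "K j"] by blast
      ultimately show "K i \<inter> K j = {\<zero>\<^bsub>M\<^esub>}" by blast
    qed
  next
    assume z: "\<forall>i\<in>{1..n}. \<forall>j\<in>{1..n}. i \<noteq> j \<longrightarrow> K i \<inter> K j = {\<zero>\<^bsub>M\<^esub>}"
    have "\<forall>i\<in>{1..n}. K i \<inter> sm_Sum R M ({1..n} - {i}) K = {\<zero>\<^bsub>M\<^esub>}"
    proof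
      fix i assume i: "i \<in> {1..n}"
      define N where "N = K i \<inter> sm_Sum R M ({1..n} - {i}) K"
      have psN: "PS_hollow R M N" using ps i N_def by blast
      have key: "finite T \<Longrightarrow> T \<subseteq> {1..n} - {i} \<Longrightarrow> N \<subseteq> sm_Sum R M T K \<Longrightarrow> N \<subseteq> {\<zero>\<^bsub>M\<^esub>}" for T
      proof (induction T rule: finite_induct)
        case empty then show ?case by (simp add: sm_Sum_empty)
      next
        case (insert j T)
        have j: "j \<in> {1..n}" "j \<noteq> i" using insert.prems by auto
        obtain a where a: "a \<in> carrier R" "a \<notin> Ann R M (K j)" "\<forall>k\<in>{1..n}-{j}. a \<in> Ann R M (K k)"
          using exists_sep[OF sec inc j(1), of "{1..n}-{j}"] by auto
        have IMK: "ideal_sm R M (PIdl a) (carrier M) \<subseteq> K j" using IM_sub[OF sumM subs j(1) a(1) a(3)] .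
        have secj: "second_sm R M (K j)" using sec j by blast
        have "K j = ideal_sm R M (PIdl a) (K j)" using second_not_ann[OF secj a(1) a(2)] by simp
        also have "\<dots> \<subseteq> ideal_sm R M (PIdl a) (carrier M)"
          using subs j submoduleE(1) by (intro ideal_sm_mono) blast
        finally have KIM: "K j \<subseteq> ideal_sm R M (PIdl a) (carrier M)" .
        have subsT: "\<And>k. k \<in> insert j T \<Longrightarrow> submodule (K k) R M" using insert.prems subs by blast
        have LT: "submodule (sm_Sum R M T K) R M" using sm_Sum_sub subsT by blast
        have "N \<subseteq> sm_sum M (K j) (sm_Sum R M T K)" using subset_trans[OF insert.prems(2) sm_Sum_insert[OF subsT]] .
        also have "\<dots> \<subseteq> sm_sum M (ideal_sm R M (PIdl a) (carrier M)) (sm_Sum R M T K)"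
          using KIM by (rule sm_sum_mono) simp
        finally have "N \<subseteq> ideal_sm R M (PIdl a) (carrier M) \<or> N \<subseteq> sm_Sum R M T K"
          by (rule PS_use[OF psN cgenideal_ideal[OF a(1)] LT])
        then show ?case
        proof
          assume "N \<subseteq> ideal_sm R M (PIdl a) (carrier M)"
          then have "N \<subseteq> K i \<inter> K j" using IMK N_def by blast
          then show ?thesis using z i j by blast
        next
          assume "N \<subseteq> sm_Sum R M T K"
          then show ?thesis using insert by blast
        qed
      qed
      have "N \<subseteq> {\<zero>\<^bsub>M\<^esub>}" by (rule key[of "{1..n} - {i}"]) (auto simp: N_def)
      moreover have "\<zero>\<^bsub>M\<^esub> \<in> N" using sub_zero[OF PS_sub[OF psN]] .
      ultimately show "K i \<inter> sm_Sum R M ({1..n} - {i}) K = {\<zero>\<^bsub>M\<^esub>}" using N_def by blast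
    qed
    then show "direct_sum_rep R M n K" using sumM unfolding direct_sum_rep_def by blast
  qed
qed

lemma sub_inter: "submodule A R M \<Longrightarrow> submodule B R M \<Longrightarrow> submodule (A \<inter> B) R M"
proof -
  assume A: "submodule A R M" and B: "submodule B R M"
  show ?thesis
  proof (rule submoduleI)
    show "A \<inter> B \<subseteq> carrier M" using submoduleE(1)[OF A] by blast
    show "\<zero>\<^bsub>M\<^esub> \<in> A \<inter> B" using sub_zero[OF A] sub_zero[OF B] by blast
    show "\<And>x. x \<in> A \<inter> B \<Longrightarrow> \<ominus>\<^bsub>M\<^esub> x \<in> A \<inter> B" using submoduleE(3)[OF A] submoduleE(3)[OF B] by blast
    show "\<And>x y. x \<in> A \<inter> B \<Longrightarrow> y \<in> A \<inter> B \<Longrightarrow> x \<oplus>\<^bsub>M\<^esub> y \<in> A \<inter> B"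
      using submoduleE(5)[OF A] submoduleE(5)[OF B] by blast
    show "\<And>r x. r \<in> carrier R \<Longrightarrow> x \<in> A \<inter> B \<Longrightarrow> r \<odot>\<^bsub>M\<^esub> x \<in> A \<inter> B"
      using submoduleE(4)[OF A] submoduleE(4)[OF B] by blast
  qed
qed

lemma sm_sum_zero: "sm_sum M {\<zero>\<^bsub>M\<^esub>} {\<zero>\<^bsub>M\<^esub>} = {\<zero>\<^bsub>M\<^esub>}"
  unfolding sm_sum_def by auto

lemma part2:
  assumes dist: "distributive_module R M" and mp: "min_PS_hollow_rep R M n K H"
    and tri: "\<forall>i\<in>{1..n}. \<forall>N. submodule N R M \<longrightarrow> N \<subseteq> K i \<longrightarrow>
               N = {\<zero>\<^bsub>M\<^esub>} \<or> strongly_irreducible R M N \<or> H_PS_hollow R M (H i) N"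
  shows "direct_sum_rep R M n K"
proof -
  have sumM: "sm_Sum R M {1..n} K = carrier M"
    and hps: "\<forall>i\<in>{1..n}. H_PS_hollow R M (H i) (K i)"
    and inc: "\<forall>i\<in>{1..n}. \<forall>j\<in>{1..n}. i \<noteq> j \<longrightarrow> \<not> In_sm R M (K i) \<subseteq> In_sm R M (K j)"
    and minl: "\<forall>j\<in>{1..n}. \<not> K j \<subseteq> sm_Sum R M ({1..n} - {j}) K"
    using mp unfolding min_PS_hollow_rep_def by auto
  have subs: "\<forall>k\<in>{1..n}. submodule (K k) R M"
  proof
    fix k assume "k \<in> {1..n}"
    then have "PS_hollow R M (K k)" using hps unfolding H_PS_hollow_def by blast
    then show "submodule (K k) R M" unfolding PS_hollow_def by (rule conjunct1)
  qed
  have Hs: "\<forall>k\<in>{1..n}. H_set R M (K k) = H k" using hps unfolding H_PS_hollow_def by blast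
  have pair: "K i \<inter> K j = {\<zero>\<^bsub>M\<^esub>}" if ij: "i \<in> {1..n}" "j \<in> {1..n}" "i \<noteq> j" for i j
  proof -
    define N where "N = K i \<inter> K j"
    have Ki: "submodule (K i) R M" and Kj: "submodule (K j) R M" using subs ij by auto
    have Nsub: "submodule N R M" unfolding N_def using sub_inter[OF Ki Kj] .
    have nsi: "\<not> strongly_irreducible R M N"
    proof
      assume "strongly_irreducible R M N"
      then have si: "\<forall>A B. submodule A R M \<longrightarrow> submodule B R M \<longrightarrow> A \<inter> B \<subseteq> N \<longrightarrow> A \<subseteq> N \<or> B \<subseteq> N"
        unfolding strongly_irreducible_def by blast
      have "K i \<inter> K j \<subseteq> N" unfolding N_def by (rule subset_refl)
      then have "K i \<subseteq> N \<or> K j \<subseteq> N" using si[rule_format, OF Ki Kj] by blast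
      then show False
      proof
        assume "K i \<subseteq> N"
        then have "K i \<subseteq> K j" unfolding N_def by blast
        moreover have "K j \<subseteq> sm_Sum R M ({1..n} - {i}) K" using ij by (intro K_sub_Sum) blast
        ultimately show False using minl ij by blast
      next
        assume "K j \<subseteq> N"
        then have "K j \<subseteq> K i" unfolding N_def by blast
        moreover have "K i \<subseteq> sm_Sum R M ({1..n} - {j}) K" using ij by (intro K_sub_Sum) blast
        ultimately show False using minl ij by blast
      qed
    qed
    have NKi: "N \<subseteq> K i" and NKj: "N \<subseteq> K j" unfolding N_def by auto
    have ti: "N = {\<zero>\<^bsub>M\<^esub>} \<or> H_PS_hollow R M (H i) N" using tri[rule_format, OF ij(1) Nsub NKi] nsi by blast
    have tj: "N = {\<zero>\<^bsub>M\<^esub>} \<or> H_PS_hollow R M (H j) N" using tri[rule_format, OF ij(2) Nsub NKj] nsi by blast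
    show ?thesis
    proof (rule ccontr)
      assume "K i \<inter> K j \<noteq> {\<zero>\<^bsub>M\<^esub>}"
      then have "N \<noteq> {\<zero>\<^bsub>M\<^esub>}" unfolding N_def .
      then have "H_PS_hollow R M (H i) N" "H_PS_hollow R M (H j) N" using ti tj by auto
      then have "H_set R M N = H i" "H_set R M N = H j" unfolding H_PS_hollow_def by auto
      then have "H_set R M (K i) = H_set R M (K j)" using Hs ij by auto
      then have "In_sm R M (K i) = In_sm R M (K j)" unfolding In_sm_def by simp
      then show False using inc ij by blast
    qed
  qed
  have "\<forall>i\<in>{1..n}. K i \<inter> sm_Sum R M ({1..n} - {i}) K = {\<zero>\<^bsub>M\<^esub>}"
  proof
    fix i assume i: "i \<in> {1..n}"
    have Ki: "submodule (K i) R M" using subs i by blast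
    have key: "finite T \<Longrightarrow> T \<subseteq> {1..n} - {i} \<Longrightarrow> K i \<inter> sm_Sum R M T K = {\<zero>\<^bsub>M\<^esub>}" for T
    proof (induction T rule: finite_induct)
      case empty then show ?case using sub_zero[OF Ki] by (simp add: sm_Sum_empty)
    next
      case (insert j T)
      have j: "j \<in> {1..n}" "j \<noteq> i" using insert.prems by auto
      have subsT: "\<And>k. k \<in> insert j T \<Longrightarrow> submodule (K k) R M" using insert.prems subs by blast
      have LT: "submodule (sm_Sum R M T K) R M" using sm_Sum_sub subsT by blast
      have Kj: "submodule (K j) R M" using subs j by blast
      have "K i \<inter> sm_Sum R M (insert j T) K \<subseteq> K i \<inter> sm_sum M (K j) (sm_Sum R M T K)"
        by (intro Int_mono subset_refl sm_Sum_insert[OF subsT])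
      also have "\<dots> = sm_sum M (K i \<inter> K j) (K i \<inter> sm_Sum R M T K)"
        using dist[unfolded distributive_module_def, rule_format, OF Ki Kj LT] .
      also have "\<dots> = {\<zero>\<^bsub>M\<^esub>}"
      proof -
        have e1: "K i \<inter> K j = {\<zero>\<^bsub>M\<^esub>}" using pair[OF i j(1)] j(2) by simp
        have "T \<subseteq> {1..n} - {i}" using insert.prems by simp
        then have e2: "K i \<inter> sm_Sum R M T K = {\<zero>\<^bsub>M\<^esub>}" by (rule insert.IH)
        show ?thesis unfolding e1 e2 by (rule sm_sum_zero)
      qed
      finally have "K i \<inter> sm_Sum R M (insert j T) K \<subseteq> {\<zero>\<^bsub>M\<^esub>}" .
      moreover have "\<zero>\<^bsub>M\<^esub> \<in> K i \<inter> sm_Sum R M (insert j T) K"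
        using sub_zero[OF Ki] sub_zero[OF sm_Sum_sub[OF subsT]] by (rule IntI)
      ultimately show ?case by (intro subset_antisym) auto
    qed
    show "K i \<inter> sm_Sum R M ({1..n} - {i}) K = {\<zero>\<^bsub>M\<^esub>}" by (rule key) auto
  qed
  then show ?thesis using sumM unfolding direct_sum_rep_def by blast
qed

end

theorem theorem5p21:
  fixes R :: "'a ring" and M :: "('a, 'b) module"
  assumes "module R M" and "carrier M \<noteq> {\<zero>\<^bsub>M\<^esub>}"
  shows "(\<forall>n K. min_second_rep R M n K \<longrightarrow>
            (\<forall>i\<in>{1..n}. \<forall>j\<in>{1..n}. i \<noteq> j \<longrightarrow> \<not> Ann R M (K i) \<subseteq> Ann R M (K j)) \<longrightarrow>
            (\<forall>i\<in>{1..n}. PS_hollow R M (K i \<inter> sm_Sum R M ({1..n} - {i}) K)) \<longrightarrow>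
            (direct_sum_rep R M n K \<longleftrightarrow>
               (\<forall>i\<in>{1..n}. \<forall>j\<in>{1..n}. i \<noteq> j \<longrightarrow> K i \<inter> K j = {\<zero>\<^bsub>M\<^esub>})))
       \<and> (distributive_module R M \<longrightarrow>
          (\<forall>n K H. min_PS_hollow_rep R M n K H \<longrightarrow>
            (\<forall>i\<in>{1..n}. \<forall>N. submodule N R M \<longrightarrow> N \<subseteq> K i \<longrightarrow>
               N = {\<zero>\<^bsub>M\<^esub>} \<or> strongly_irreducible R M N \<or> H_PS_hollow R M (H i) N) \<longrightarrow>
            direct_sum_rep R M n K))"
  apply (intro conjI allI impI)
  subgoal by (rule module.part1[OF assms(1)]) assumption+
  subgoal by (rule module.part2[OF assms(1)]) assumption+
  done

end
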